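(* Let $(V,[\cdot,\cdot]_V,\langle\cdot,\cdot\rangle)$ be a quadratic Lie algebra whose adjoint map $\mathrm{ad}:V\to\mathfrak{gl}(V)$ is injective, and let $\mathcal V$ be the string-type Lie 2-algebra: the 2-vector space of the complex $\mathbb R\xrightarrow{0}V$ (objects $V$, morphisms $V\oplus\mathbb R$), bracket $[(u,r),(v,r')]_{\mathcal V}=([u,v]_V,0)$, Jacobiator $J_{u,v,w}=([[u,v]_V,w]_V,\langle[u,v]_V,w\rangle)$. Identify $\mathrm{End}^0_{\mathrm d}(\mathcal V)=\mathfrak{gl}(V)\oplus\mathbb R$ and $\mathrm{End}^1(\mathcal V)=\mathrm{Hom}(V,\mathbb R)$, fix a linear complement $\mathrm{Im}(\mathrm{ad})^\perp$ of $\mathrm{Im}(\mathrm{ad})$ in $\mathfrak{gl}(V)$, and define $\alpha:\mathfrak{gl}(V)\oplus\mathbb R\to\mathrm{Hom}(V,\mathbb R)$ by $\alpha(\mathrm{ad}_u+X+r)(v)=\langle u,v\rangle$ for $u,v\in V$, $X\in\mathrm{Im}(\mathrm{ad})^\perp$, $r\in\mathbb R$. Let $\mu=(\mathrm{Id},\mathrm{Id},\mu_2)$ with $\mu_2(A,B)=([A,B],d\alpha(A,B))$, $d\alpha(A,B)=[A,\alpha(B)]-[B,\alpha(A)]-\alpha([A,B])$. Then $\mu_2(\mathrm{ad}_u,\mathrm{ad}_v)(w)=J_{u,v,w}$ for all $u,v,w\in V$, and the graph $\mathfrak G_{\mathrm{ad}_{\mathcal V}}$ of the linear functor $\mathrm{ad}_{\mathcal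 V}:\mathcal V\to\mathfrak{gl}(\mathcal V)$, $\mathrm{ad}_{\mathcal V}\xi(\eta)=[\xi,\eta]_{\mathcal V}$, is a Dirac structure of the $\mu$-twisted omni-Lie 2-algebra $\mathfrak{gl}(\mathcal V)\oplus_\mu\mathcal V$ whose associated Lie 2-algebra $(\mathcal V,[\cdot,\cdot]_{\mu,\mathrm{ad}_{\mathcal V}},J)$, with $[\xi,\eta]_{\mu,\mathrm{ad}_{\mathcal V}}=\mu_1(\mathrm{ad}_{\mathcal V}\xi)(\eta)$ and $J_{u,v,w}=\mu_2(\mathrm{ad}_{\mathcal V}u,\mathrm{ad}_{\mathcal V}v)(w)$, is exactly the string-type Lie 2-algebra $\mathcal V$.
   Context: All vector spaces are finite-dimensional over $\mathbb R$. A quadratic Lie algebra is a Lie algebra with a nondegenerate symmetric bilinear form invariant under the adjoint action. For a 2-term complex $V_1\xrightarrow{\mathrm d}V_0$, the 2-vector space $\mathbb V$ has objects $V_0$, morphisms $V_0\oplus V_1$ ($u+m$), $s(u+m)=u$, $t(u+m)=u+\mathrm dm$. $\mathrm{End}^0_{\mathrm d}(\mathbb V)=\{A=(A_0,A_1):A_0\mathrm d=\mathrm dA_1\}$, $\mathrm{End}^1(\mathbb V)=\mathrm{Hom}(V_0,V_1)$, $\delta\phi=(\mathrm d\phi,\phi\mathrm d)$; brackets $[A,B]$ componentwise commutator, $[A,\phi]=-[\phi,A]=A_1\phi-\phi A_0$, $[\phi,\psi]_\delta=\phi\mathrm d\psi-\psi\mathrm d\phi$. The strict Lie 2-algebra $\mathfrak{gl}(\mathbb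 V)$ has objects $\mathrm{End}^0_{\mathrm d}(\mathbb V)$, morphisms $A+\phi$, $s(A+\phi)=A$, $t(A+\phi)=A+\delta\phi$, bracket $[A+\phi,B+\psi]=[A,B]+[\phi,\psi]_\delta+[A,\psi]+[\phi,B]$, and acts on $\mathbb V$ by $A(u)=A_0u$, $(A+\phi)(u+m)=A_0u+(A_1m+\phi(u+\mathrm dm))$. A Lie 2-algebra is a 2-vector space with a skew-symmetric bilinear functor and a skew-symmetric trilinear natural isomorphism $J_{x,y,z}:[[x,y],z]\to[x,[y,z]]+[[x,z],y]$ satisfying the Jacobiator identity; Lie 2-algebra (iso)morphisms $(\mu_0,\mu_1,\mu_2)$ consist of a linear functor and a skew-symmetric bilinear natural transformation $\mu_2(u,v):\mu_0[u,v]\to[\mu_0u,\mu_0v]$ compatible with the Jacobiators. The $\mu$-twisted omni-Lie 2-algebra $\mathfrak{gl}(\mathbb V)\oplus_\mu\mathbb V$ is $\mathfrak{gl}(\mathbb V)\oplus\mathbb V$ with bracket $[\![A+\phi+u+m,B+\psi+v+n]\!]_\mu=[A+\phi,B+\psi]+\tfrac12(\mu_1(A+\phi)(v+n)-\mu_1(B+\psi)(u+m))$ and pairing $\langle A+\phi+u+m,B+\psi+v+n\rangle_\mu=\tfrac12(\mu_1(A+\phi)(v+n)+\mu_1(B+\psi)(u+m))$ (on objects, same with $\mu_0$). A Dirac structure is a 2-sub-vector space $L$ with $L=L^\perp$ (w.r.t. $\langle\cdot,\cdot\rangle_\mu$) closed under $[\![\cdot,\cdot]\!]_\mu$. *)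

theory Defs
  imports "HOL-Analysis.Analysis"
begin

text \<open>Objects of the 2-vector space are elements u of V0 (type 'a); morphisms u+m are
pairs (u,m) :: 'a \<times> 'b with source u and target u + d m.\<close>

text \<open>End^0_d: pairs (A0,A1) of linear maps with A0 o d = d o A1.
  End^1 = Hom(V0,V1).  A morphism of gl(V) is a pair (A, phi), written A+phi in the paper.\<close>

definition end0 :: "('b::real_vector \<Rightarrow> 'a::real_vector) \<Rightarrow> (('a \<Rightarrow> 'a) \<times> ('b \<Rightarrow> 'b)) set" where
  "end0 d = {(A0, A1). linear A0 \<and> linear A1 \<and> (\<forall>m. A0 (d m) = d (A1 m))}"

definition end1 :: "('a::real_vector \<Rightarrow> 'b::real_vector) set" where
  "end1 = {phi. linear phi}"

definition delta :: "('b::real_vector \<Rightarrow> 'a::real_vector) \<Rightarrow> ('a \<Rightarrow> 'b) \<Rightarrow> ('a \<Rightarrow> 'a) \<times> ('b \<Rightarrow> 'b)" where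
  "delta d phi = ((\<lambda>u. d (phi u)), (\<lambda>m. phi (d m)))"

definition end0_add :: "('a \<Rightarrow> 'a::real_vector) \<times> ('b \<Rightarrow> 'b::real_vector) \<Rightarrow> ('a \<Rightarrow> 'a) \<times> ('b \<Rightarrow> 'b) \<Rightarrow> ('a \<Rightarrow> 'a) \<times> ('b \<Rightarrow> 'b)" where
  "end0_add A B = ((\<lambda>u. fst A u + fst B u), (\<lambda>m. snd A m + snd B m))"

definition br_end0 :: "('a \<Rightarrow> 'a::real_vector) \<times> ('b \<Rightarrow> 'b::real_vector) \<Rightarrow> ('a \<Rightarrow> 'a) \<times> ('b \<Rightarrow> 'b) \<Rightarrow> ('a \<Rightarrow> 'a) \<times> ('b \<Rightarrow> 'b)" where
  "br_end0 A B = ((\<lambda>u. fst A (fst B u) - fst B (fst A u)), (\<lambda>m. snd A (snd B m) - snd B (snd A m)))"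

definition br_end01 :: "('a \<Rightarrow> 'a::real_vector) \<times> ('b \<Rightarrow> 'b::real_vector) \<Rightarrow> ('a \<Rightarrow> 'b) \<Rightarrow> ('a \<Rightarrow> 'b)" where
  "br_end01 A phi = (\<lambda>u. snd A (phi u) - phi (fst A u))"

definition br_delta :: "('b::real_vector \<Rightarrow> 'a::real_vector) \<Rightarrow> ('a \<Rightarrow> 'b) \<Rightarrow> ('a \<Rightarrow> 'b) \<Rightarrow> ('a \<Rightarrow> 'b)" where
  "br_delta d phi psi = (\<lambda>u. phi (d (psi u)) - psi (d (phi u)))"

text \<open>Bracket of morphisms of gl(V):
  [A+phi, B+psi] = [A,B] + [phi,psi]_delta + [A,psi] + [phi,B]\<close>
definition gl_br :: "('b::real_vector \<Rightarrow> 'a::real_vector)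
   \<Rightarrow> (('a \<Rightarrow> 'a) \<times> ('b \<Rightarrow> 'b)) \<times> ('a \<Rightarrow> 'b) \<Rightarrow> (('a \<Rightarrow> 'a) \<times> ('b \<Rightarrow> 'b)) \<times> ('a \<Rightarrow> 'b)
   \<Rightarrow> (('a \<Rightarrow> 'a) \<times> ('b \<Rightarrow> 'b)) \<times> ('a \<Rightarrow> 'b)" where
  "gl_br d X Y = (br_end0 (fst X) (fst Y),
      (\<lambda>u. br_delta d (snd X) (snd Y) u + br_end01 (fst X) (snd Y) u - br_end01 (fst Y) (snd X) u))"

definition act_obj :: "('a \<Rightarrow> 'a) \<times> ('b \<Rightarrow> 'b) \<Rightarrow> 'a \<Rightarrow> 'a" where
  "act_obj A u = fst A u"

definition act_mor :: "('b::real_vector \<Rightarrow> 'a::real_vector)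
   \<Rightarrow> (('a \<Rightarrow> 'a) \<times> ('b \<Rightarrow> 'b)) \<times> ('a \<Rightarrow> 'b) \<Rightarrow> 'a \<times> 'b \<Rightarrow> 'a \<times> 'b" where
  "act_mor d X um = (fst (fst X) (fst um), snd (fst X) (snd um) + snd X (fst um + d (snd um)))"

text \<open>Objects: (A, u) with A in End^0_d, u in V0.
  Morphisms: ((A,phi),(u,m)), i.e. A+phi+u+m.\<close>

definition omni_obj :: "('b::real_vector \<Rightarrow> 'a::real_vector) \<Rightarrow> ((('a \<Rightarrow> 'a) \<times> ('b \<Rightarrow> 'b)) \<times> 'a) set" where
  "omni_obj d = end0 d \<times> UNIV"

definition omni_mor :: "('b::real_vector \<Rightarrow> 'a::real_vector)
   \<Rightarrow> (((('a \<Rightarrow> 'a) \<times> ('b \<Rightarrow> 'b)) \<times> ('a \<Rightarrow> 'b)) \<times> ('a \<times> 'b)) set" where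
  "omni_mor d = (end0 d \<times> end1) \<times> UNIV"

definition omni_s :: "(((('a \<Rightarrow> 'a) \<times> ('b \<Rightarrow> 'b)) \<times> ('a \<Rightarrow> 'b)) \<times> ('a \<times> 'b)) \<Rightarrow> (('a \<Rightarrow> 'a) \<times> ('b \<Rightarrow> 'b)) \<times> 'a" where
  "omni_s e = (fst (fst e), fst (snd e))"

definition omni_t :: "('b::real_vector \<Rightarrow> 'a::real_vector)
   \<Rightarrow> (((('a \<Rightarrow> 'a) \<times> ('b \<Rightarrow> 'b)) \<times> ('a \<Rightarrow> 'b)) \<times> ('a \<times> 'b)) \<Rightarrow> (('a \<Rightarrow> 'a) \<times> ('b \<Rightarrow> 'b)) \<times> 'a" where
  "omni_t d e = (end0_add (fst (fst e)) (delta d (snd (fst e))), fst (snd e) + d (snd (snd e)))"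

definition omni_id :: "(('a \<Rightarrow> 'a) \<times> ('b \<Rightarrow> 'b)) \<times> 'a \<Rightarrow> (((('a \<Rightarrow> 'a) \<times> ('b \<Rightarrow> 'b)) \<times> ('a \<Rightarrow> 'b::zero)) \<times> ('a \<times> 'b))" where
  "omni_id x = ((fst x, (\<lambda>u. 0)), (snd x, 0))"

definition obj_zero :: "(('a \<Rightarrow> 'a::real_vector) \<times> ('b \<Rightarrow> 'b::real_vector)) \<times> 'a" where
  "obj_zero = (((\<lambda>u. 0), (\<lambda>m. 0)), 0)"

definition obj_add :: "(('a \<Rightarrow> 'a::real_vector) \<times> ('b \<Rightarrow> 'b::real_vector)) \<times> 'a \<Rightarrow> (('a \<Rightarrow> 'a) \<times> ('b \<Rightarrow> 'b)) \<times> 'a \<Rightarrow> (('a \<Rightarrow> 'a) \<times> ('b \<Rightarrow> 'b)) \<times> 'a" where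
  "obj_add x y = (end0_add (fst x) (fst y), snd x + snd y)"

definition obj_scale :: "real \<Rightarrow> (('a \<Rightarrow> 'a::real_vector) \<times> ('b \<Rightarrow> 'b::real_vector)) \<times> 'a \<Rightarrow> (('a \<Rightarrow> 'a) \<times> ('b \<Rightarrow> 'b)) \<times> 'a" where
  "obj_scale c x = (((\<lambda>u. c *\<^sub>R fst (fst x) u), (\<lambda>m. c *\<^sub>R snd (fst x) m)), c *\<^sub>R snd x)"

definition mor_zero :: "(((('a \<Rightarrow> 'a::real_vector) \<times> ('b \<Rightarrow> 'b::real_vector)) \<times> ('a \<Rightarrow> 'b)) \<times> ('a \<times> 'b))" where
  "mor_zero = ((((\<lambda>u. 0), (\<lambda>m. 0)), (\<lambda>u. 0)), 0)"

definition mor_add :: "(((('a \<Rightarrow> 'a::real_vector) \<times> ('b \<Rightarrow> 'b::real_vector)) \<times> ('a \<Rightarrow> 'b)) \<times> ('a \<times> 'b))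
   \<Rightarrow> (((('a \<Rightarrow> 'a) \<times> ('b \<Rightarrow> 'b)) \<times> ('a \<Rightarrow> 'b)) \<times> ('a \<times> 'b))
   \<Rightarrow> (((('a \<Rightarrow> 'a) \<times> ('b \<Rightarrow> 'b)) \<times> ('a \<Rightarrow> 'b)) \<times> ('a \<times> 'b))" where
  "mor_add x y = ((end0_add (fst (fst x)) (fst (fst y)), (\<lambda>u. snd (fst x) u + snd (fst y) u)), snd x + snd y)"

definition mor_scale :: "real \<Rightarrow> (((('a \<Rightarrow> 'a::real_vector) \<times> ('b \<Rightarrow> 'b::real_vector)) \<times> ('a \<Rightarrow> 'b)) \<times> ('a \<times> 'b))
   \<Rightarrow> (((('a \<Rightarrow> 'a) \<times> ('b \<Rightarrow> 'b)) \<times> ('a \<Rightarrow> 'b)) \<times> ('a \<times> 'b))" where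
  "mor_scale c x = ((((\<lambda>u. c *\<^sub>R fst (fst (fst x)) u), (\<lambda>m. c *\<^sub>R snd (fst (fst x)) m)),
                      (\<lambda>u. c *\<^sub>R snd (fst x) u)), c *\<^sub>R snd x)"

text \<open>mu-twisted bracket and pairing (mu0, mu1 the functor part of mu).\<close>

definition omni_br_obj where
  "omni_br_obj mu0 x y =
     (br_end0 (fst x) (fst y), (1/2) *\<^sub>R (act_obj (mu0 (fst x)) (snd y) - act_obj (mu0 (fst y)) (snd x)))"

definition omni_pair_obj where
  "omni_pair_obj mu0 x y = (1/2) *\<^sub>R (act_obj (mu0 (fst x)) (snd y) + act_obj (mu0 (fst y)) (snd x))"

definition omni_br_mor where
  "omni_br_mor d mu1 x y =
     (gl_br d (fst x) (fst y), (1/2) *\<^sub>R (act_mor d (mu1 (fst x)) (snd y) - act_mor d (mu1 (fst y)) (snd x)))"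

definition omni_pair_mor where
  "omni_pair_mor d mu1 x y = (1/2) *\<^sub>R (act_mor d (mu1 (fst x)) (snd y) + act_mor d (mu1 (fst y)) (snd x))"

definition two_subspace where
  "two_subspace d Lobj Lmor \<longleftrightarrow>
     Lobj \<subseteq> omni_obj d \<and> Lmor \<subseteq> omni_mor d \<and>
     obj_zero \<in> Lobj \<and> (\<forall>x\<in>Lobj. \<forall>y\<in>Lobj. obj_add x y \<in> Lobj) \<and> (\<forall>c. \<forall>x\<in>Lobj. obj_scale c x \<in> Lobj) \<and>
     mor_zero \<in> Lmor \<and> (\<forall>x\<in>Lmor. \<forall>y\<in>Lmor. mor_add x y \<in> Lmor) \<and> (\<forall>c. \<forall>x\<in>Lmor. mor_scale c x \<in> Lmor) \<and>
     (\<forall>e\<in>Lmor. omni_s e \<in> Lobj \<and> omni_t d e \<in> Lobj) \<and>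
     (\<forall>x\<in>Lobj. omni_id x \<in> Lmor)"

definition perp_mor where
  "perp_mor d mu1 Lmor = {e \<in> omni_mor d. \<forall>l\<in>Lmor. omni_pair_mor d mu1 e l = 0}"

definition perp_obj where
  "perp_obj d mu1 Lmor = {x \<in> omni_obj d. omni_id x \<in> perp_mor d mu1 Lmor}"

definition dirac where
  "dirac d mu0 mu1 Lobj Lmor \<longleftrightarrow>
     two_subspace d Lobj Lmor \<and>
     Lobj = perp_obj d mu1 Lmor \<and> Lmor = perp_mor d mu1 Lmor \<and>
     (\<forall>x\<in>Lobj. \<forall>y\<in>Lobj. omni_br_obj mu0 x y \<in> Lobj) \<and>
     (\<forall>x\<in>Lmor. \<forall>y\<in>Lmor. omni_br_mor d mu1 x y \<in> Lmor)"

definition quadratic_lie where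
  "quadratic_lie (br :: 'a::real_vector \<Rightarrow> 'a \<Rightarrow> 'a) (bf :: 'a \<Rightarrow> 'a \<Rightarrow> real) \<longleftrightarrow>
     bilinear br \<and> (\<forall>u v. br u v = - br v u) \<and>
     (\<forall>u v w. br u (br v w) + br v (br w u) + br w (br u v) = 0) \<and>
     bilinear bf \<and> (\<forall>u v. bf u v = bf v u) \<and> (\<forall>u. (\<forall>v. bf u v = 0) \<longrightarrow> u = 0) \<and>
     (\<forall>u v w. bf (br w u) v + bf u (br w v) = 0)"

text \<open>String-type Lie 2-algebra on R --0--> V.\<close>
definition str_d :: "real \<Rightarrow> 'a::real_vector" where
  "str_d = (\<lambda>r. 0)"

definition str_br_mor :: "('a \<Rightarrow> 'a \<Rightarrow> 'a) \<Rightarrow> 'a \<times> real \<Rightarrow> 'a \<times> real \<Rightarrow> 'a \<times> real" where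
  "str_br_mor br x y = (br (fst x) (fst y), 0)"

definition str_J :: "('a \<Rightarrow> 'a \<Rightarrow> 'a) \<Rightarrow> ('a \<Rightarrow> 'a \<Rightarrow> real) \<Rightarrow> 'a \<Rightarrow> 'a \<Rightarrow> 'a \<Rightarrow> 'a \<times> real" where
  "str_J br bf u v w = (br (br u v) w, bf (br u v) w)"

text \<open>ad_V : V -> gl(V), ad_V xi (eta) = [xi,eta]_V.  On an object u it is (ad_u, 0) in End^0
  (A1 = 0 since [u, 0+m] = 0), on a morphism u+m it is (ad_u,0) + 0.\<close>
definition ad_obj :: "('a \<Rightarrow> 'a \<Rightarrow> 'a) \<Rightarrow> 'a \<Rightarrow> ('a \<Rightarrow> 'a) \<times> (real \<Rightarrow> real)" where
  "ad_obj br u = (br u, (\<lambda>m. 0))"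

definition ad_mor :: "('a \<Rightarrow> 'a \<Rightarrow> 'a) \<Rightarrow> 'a \<times> real \<Rightarrow> (('a \<Rightarrow> 'a) \<times> (real \<Rightarrow> real)) \<times> ('a \<Rightarrow> real)" where
  "ad_mor br x = (ad_obj br (fst x), (\<lambda>v. 0))"

definition graph_obj where
  "graph_obj br = {(ad_obj br u, u) | u. True}"

definition graph_mor where
  "graph_mor br = {(ad_mor br x, x) | x. True}"

definition ad_complement :: "('a::real_vector \<Rightarrow> 'a \<Rightarrow> 'a) \<Rightarrow> ('a \<Rightarrow> 'a) set \<Rightarrow> bool" where
  "ad_complement br W \<longleftrightarrow>
     (\<forall>X\<in>W. linear X) \<and> (\<lambda>x. 0) \<in> W \<and> (\<forall>X\<in>W. \<forall>Y\<in>W. (\<lambda>x. X x + Y x) \<in> W) \<and>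
     (\<forall>c. \<forall>X\<in>W. (\<lambda>x. c *\<^sub>R X x) \<in> W) \<and>
     (\<forall>u. br u \<in> W \<longrightarrow> br u = (\<lambda>x. 0)) \<and>
     (\<forall>A. linear A \<longrightarrow> (\<exists>u. \<exists>X\<in>W. A = (\<lambda>x. br u x + X x)))"

definition alpha :: "('a::real_vector \<Rightarrow> 'a \<Rightarrow> 'a) \<Rightarrow> ('a \<Rightarrow> 'a \<Rightarrow> real) \<Rightarrow> ('a \<Rightarrow> 'a) set
     \<Rightarrow> ('a \<Rightarrow> 'a) \<times> (real \<Rightarrow> real) \<Rightarrow> ('a \<Rightarrow> real)" where
  "alpha br bf W A = (\<lambda>v. bf (THE u. \<exists>X\<in>W. fst A = (\<lambda>x. br u x + X x)) v)"

definition dalpha where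
  "dalpha br bf W A B = (\<lambda>v. br_end01 A (alpha br bf W B) v - br_end01 B (alpha br bf W A) v
                              - alpha br bf W (br_end0 A B) v)"

definition mu2 where
  "mu2 br bf W A B = (br_end0 A B, dalpha br bf W A B)"

end

theory Submission
  imports Defs
begin

lemma bl_facts:
  assumes "bilinear br"
  shows "linear (br u)" "linear (\<lambda>x. br x y)" "br 0 = (\<lambda>x. 0)"
    "br (u - v) y = br u y - br v y" "br (u + v) y = br u y + br v y"
    "br (c *\<^sub>R u) y = c *\<^sub>R br u y"
    "br u (v + w) = br u v + br u w" "br (u + v) = (\<lambda>y. br u y + br v y)"
    "br (c *\<^sub>R u) = (\<lambda>y. c *\<^sub>R br u y)" "br u (c *\<^sub>R v) = c *\<^sub>R br u v" "br u 0 = 0"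
proof -
  have l1: "linear (\<lambda>y. br u y)" for u using assms unfolding bilinear_def by blast
  have l2: "linear (\<lambda>x. br x y)" for y using assms unfolding bilinear_def by blast
  show "linear (br u)" using l1[of u] by (simp add: eta_contract_eq)
  show "linear (\<lambda>x. br x y)" by (rule l2)
  show "br 0 = (\<lambda>x. 0)" using linear_0[OF l2] by auto
  show "br (u - v) y = br u y - br v y" using linear_diff[OF l2] by auto
  show "br (u + v) y = br u y + br v y" using linear_add[OF l2] by auto
  show "br (c *\<^sub>R u) y = c *\<^sub>R br u y" using linear_scale[OF l2] by auto
  show "br u (v + w) = br u v + br u w" using linear_add[OF l1] by auto
  show "br u (c *\<^sub>R v) = c *\<^sub>R br u v" using linear_scale[OF l1] by auto
  show "br u 0 = 0" using linear_0[OF l1] by auto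
  show "br (u + v) = (\<lambda>y. br u y + br v y)" using linear_add[OF l2] by auto
  show "br (c *\<^sub>R u) = (\<lambda>y. c *\<^sub>R br u y)" using linear_scale[OF l2] by auto
qed

lemma half: "(1/2::real) *\<^sub>R (a - - a) = (a::'a::real_vector)"
proof -
  have "a - - a = 2 *\<^sub>R a" by (simp add: scaleR_2)
  then show ?thesis by simp
qed
lemma cl_obj_lem:
  assumes comm: "\<And>u v. (\<lambda>w. br u (br v w) - br v (br u w)) = br (br u v)"
    and anti: "\<And>u v. br u v = - br v u"
  shows "omni_br_obj id (ad_obj br u, u) (ad_obj br v, v) = (ad_obj br (br u v), br u v)"
proof -
  have "br_end0 (ad_obj br u) (ad_obj br v) = ad_obj br (br u v)"
    unfolding br_end0_def ad_obj_def using comm[of u v] by simp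
  moreover have "(1/2::real) *\<^sub>R (br u v - br v u) = br u v" using half anti[of v u] by metis
  ultimately show ?thesis unfolding omni_br_obj_def act_obj_def ad_obj_def by simp
qed
lemma cl_mor_lem:
  assumes comm: "\<And>u v. (\<lambda>w. br u (br v w) - br v (br u w)) = br (br u v)"
    and anti: "\<And>u v. br u v = - br v u"
  shows "omni_br_mor str_d id (ad_mor br x, x) (ad_mor br y, y) = (ad_mor br (br (fst x) (fst y), 0), (br (fst x) (fst y), 0))"
proof -
  have "br_end0 (ad_obj br (fst x)) (ad_obj br (fst y)) = ad_obj br (br (fst x) (fst y))"
    unfolding br_end0_def ad_obj_def using comm[of "fst x" "fst y"] by simp
  moreover have "(1/2::real) *\<^sub>R (br (fst x) (fst y) - br (fst y) (fst x)) = br (fst x) (fst y)" using half anti by metis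
  ultimately show ?thesis unfolding omni_br_mor_def act_mor_def ad_mor_def gl_br_def br_delta_def br_end01_def
    by (simp add: ad_obj_def)
qed

lemma alpha_ad:
  assumes q: "quadratic_lie br bf" and inj: "inj br" and W: "ad_complement br W"
    and A: "fst A = br v"
  shows "alpha br bf W A = bf v"
proof -
  have blb: "bilinear br" using q unfolding quadratic_lie_def by blast
  have W0: "(\<lambda>x. 0) \<in> W" and Wadd: "\<forall>X\<in>W. \<forall>Y\<in>W. (\<lambda>x. X x + Y x) \<in> W"
    and Wsc: "\<forall>c. \<forall>X\<in>W. (\<lambda>x. c *\<^sub>R X x) \<in> W" and Wad: "\<forall>u. br u \<in> W \<longrightarrow> br u = (\<lambda>x. 0)"
    using W unfolding ad_complement_def by blast+
  have "(THE u. \<exists>X\<in>W. br v = (\<lambda>x. br u x + X x)) = v"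
  proof (rule the_equality)
    show "\<exists>X\<in>W. br v = (\<lambda>x. br v x + X x)" using W0 by (intro bexI[of _ "\<lambda>x. 0"]) auto
  next
    fix u assume "\<exists>X\<in>W. br v = (\<lambda>x. br u x + X x)"
    then obtain X where X: "X \<in> W" "br v = (\<lambda>x. br u x + X x)" by blast
    have "br (v - u) = X"
    proof
      fix x show "br (v - u) x = X x" using bl_facts(4)[OF blb, of v u x] fun_cong[OF X(2), of x] by simp
    qed
    then have "br (v - u) = br 0" using Wad X(1) bl_facts(3)[OF blb] by auto
    then have "v - u = 0" using inj by (meson injD)
    then show "u = v" by simp
  qed
  then show ?thesis unfolding alpha_def A by simp
qed

theorem mainTheorem17:
  fixes br :: "'a::euclidean_space \<Rightarrow> 'a \<Rightarrow> 'a"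
    and bf :: "'a \<Rightarrow> 'a \<Rightarrow> real"
    and W :: "('a \<Rightarrow> 'a) set"
  assumes "quadratic_lie br bf"
    and "inj br"
    and "ad_complement br W"
  shows "(\<forall>u v w. act_mor str_d (mu2 br bf W (ad_obj br u) (ad_obj br v)) (w, 0) = str_J br bf u v w)
    \<and> dirac str_d id id (graph_obj br) (graph_mor br)
    \<and> (\<forall>u v. act_obj (id (ad_obj br u)) v = br u v)
    \<and> (\<forall>x y. act_mor str_d (id (ad_mor br x)) y = str_br_mor br x y)
    \<and> (\<forall>u v w. act_mor str_d (mu2 br bf W (ad_obj br u) (ad_obj br v)) (w, 0) = str_J br bf u v w)"
proof -
  note q = assms(1)
  have blb: "bilinear br" and anti: "\<And>u v. br u v = - br v u"
    and jac: "\<And>u v w. br u (br v w) + br v (br w u) + br w (br u v) = 0"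
    and inv: "\<And>u v w. bf (br w u) v + bf u (br w v) = 0"
    using q unfolding quadratic_lie_def by blast+
  have comm: "(\<lambda>w. br u (br v w) - br v (br u w)) = br (br u v)" for u v
  proof
    fix w
    have "br u (br v w) + br v (br w u) + br w (br u v) = 0" by (rule jac)
    moreover have "br v (br w u) = - br v (br u w)" using anti[of w u] bl_facts[OF blb] 
      by (metis add.inverse_inverse add.right_inverse add_right_cancel)
    moreover have "br w (br u v) = - br (br u v) w" by (rule anti)
    ultimately show "br u (br v w) - br v (br u w) = br (br u v) w"
      by (simp add: algebra_simps)
  qed
  have ad_end0: "ad_obj br u \<in> end0 str_d" for u
    unfolding ad_obj_def end0_def str_d_def using bl_facts[OF blb] by (auto intro: linear_zero)
  have P1: "\<forall>u v w. act_mor str_d (mu2 br bf W (ad_obj br u) (ad_obj br v)) (w, 0) = str_J br bf u v w"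
  proof (intro allI)
    fix u v w
    have a1: "alpha br bf W (ad_obj br u) = bf u" "alpha br bf W (ad_obj br v) = bf v"
      by (rule alpha_ad[OF assms]; simp add: ad_obj_def)+
    have a2: "alpha br bf W (br_end0 (ad_obj br u) (ad_obj br v)) = bf (br u v)"
      by (rule alpha_ad[OF assms]) (simp add: br_end0_def ad_obj_def comm)
    have i1: "bf u (br v w) = bf (br u v) w" using inv[where u=u and v=w and w=v] anti[of v u]
      using q unfolding quadratic_lie_def bilinear_def
      by (metis add.commute add_eq_0_iff linear_neg)
    have i2: "bf v (br u w) = - bf (br u v) w" using inv[where u=v and v=w and w=u] by (simp add: eq_neg_iff_add_eq_0 add.commute)
    show "act_mor str_d (mu2 br bf W (ad_obj br u) (ad_obj br v)) (w, 0) = str_J br bf u v w"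
      unfolding act_mor_def mu2_def str_J_def dalpha_def br_end01_def a1 a2
      by (simp add: br_end0_def ad_obj_def comm str_d_def i1 i2)
  qed
  have gobj: "x \<in> graph_obj br \<longleftrightarrow> x = (ad_obj br (snd x), snd x)" for x
    unfolding graph_obj_def by (cases x) auto
  have gmor: "e \<in> graph_mor br \<longleftrightarrow> e = (ad_mor br (snd e), snd e)" for e
    unfolding graph_mor_def by (cases e) auto
  have br0: "br 0 = (\<lambda>x. 0)" and brz: "\<And>u. br u 0 = 0" using bl_facts[OF blb] by auto
  have ad_mor_in: "(ad_mor br x, x) \<in> omni_mor str_d" for x
    unfolding omni_mor_def end1_def ad_mor_def using ad_end0 by (auto intro: linear_zero)
  have orth: "omni_pair_mor str_d id e l = 0" if "e \<in> graph_mor br" "l \<in> graph_mor br" for e l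
  proof -
    have e0: "e = (ad_mor br (snd e), snd e)" using that(1) gmor by blast
    obtain u m where e: "e = (ad_mor br (u,m), (u,m))" using e0 by (cases "snd e") auto
    have l0: "l = (ad_mor br (snd l), snd l)" using that(2) gmor by blast
    obtain v n where l: "l = (ad_mor br (v,n), (v,n))" using l0 by (cases "snd l") auto
    show ?thesis unfolding e l omni_pair_mor_def act_mor_def ad_mor_def ad_obj_def
      using anti[of u v] by (simp add: zero_prod_def)
  qed
  have perp_sub: "e \<in> graph_mor br" if e: "e \<in> perp_mor str_d id (graph_mor br)" for e
  proof -
    obtain A0 A1 phi u m where E: "e = (((A0, A1), phi), (u, m))" by (cases e) auto
    have lin: "linear A0" "linear A1" "linear phi" using e unfolding E perp_mor_def omni_mor_def end0_def end1_def by auto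
    have o: "omni_pair_mor str_d id e (ad_mor br (v,n), (v,n)) = 0" for v n
    proof -
      have "(ad_mor br (v,n), (v,n)) \<in> graph_mor br" unfolding graph_mor_def by blast
      then show ?thesis using e unfolding perp_mor_def by auto
    qed
    have o2: "A0 v + br v u = 0 \<and> A1 n + phi v = 0" for v n
      using o[of v n] unfolding E omni_pair_mor_def act_mor_def ad_mor_def ad_obj_def str_d_def
      by (simp add: zero_prod_def)
    have p0: "phi 0 = 0" using linear_0[OF lin(3)] .
    have a1: "A1 = (\<lambda>m. 0)" using o2[of 0] p0 by auto
    have ph: "phi = (\<lambda>v. 0)" using o2 a1 by auto
    have a0: "A0 = br u" proof fix v show "A0 v = br u v" using o2[of v 0] anti[of v u] by (simp add: eq_neg_iff_add_eq_0)
    qed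
    show ?thesis unfolding gmor E ad_mor_def ad_obj_def a0 a1 ph by simp
  qed
  have Lmor: "graph_mor br = perp_mor str_d id (graph_mor br)"
  proof
    show "graph_mor br \<subseteq> perp_mor str_d id (graph_mor br)"
    proof
      fix e assume e: "e \<in> graph_mor br"
      then have "e \<in> omni_mor str_d" using gmor ad_mor_in by (metis (no_types))
      then show "e \<in> perp_mor str_d id (graph_mor br)" unfolding perp_mor_def using orth e by auto
    qed
  qed (use perp_sub in auto)
  have Lobj: "graph_obj br = perp_obj str_d id (graph_mor br)"
  proof
    show "graph_obj br \<subseteq> perp_obj str_d id (graph_mor br)"
    proof
      fix x assume x: "x \<in> graph_obj br"
      then obtain u where X: "x = (ad_obj br u, u)" using gobj by blast
      have "omni_id x = (ad_mor br (u,0), (u,0))" unfolding X omni_id_def ad_mor_def by simp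
      then have "omni_id x \<in> graph_mor br" unfolding graph_mor_def by auto
      then show "x \<in> perp_obj str_d id (graph_mor br)" unfolding perp_obj_def omni_obj_def
        using Lmor X ad_end0 by auto
    qed
  next
    show "perp_obj str_d id (graph_mor br) \<subseteq> graph_obj br"
    proof
      fix x assume x: "x \<in> perp_obj str_d id (graph_mor br)"
      then have "omni_id x \<in> graph_mor br" using Lmor unfolding perp_obj_def by auto
      then show "x \<in> graph_obj br" unfolding gmor gobj omni_id_def ad_mor_def
        by (cases x) auto
    qed
  qed
  have sub: "two_subspace str_d (graph_obj br) (graph_mor br)"
    unfolding two_subspace_def
  proof (intro conjI ballI allI)
    show "graph_obj br \<subseteq> omni_obj str_d" unfolding omni_obj_def graph_obj_def using ad_end0 by auto
    show "graph_mor br \<subseteq> omni_mor str_d" unfolding graph_mor_def using ad_mor_in by blast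
    show "obj_zero \<in> graph_obj br" unfolding gobj obj_zero_def ad_obj_def by (simp add: br0)
    show "mor_zero \<in> graph_mor br" unfolding gmor mor_zero_def ad_mor_def ad_obj_def by (simp add: br0 zero_prod_def)
    fix x y assume "x \<in> graph_obj br" "y \<in> graph_obj br"
    then obtain u v where "x = (ad_obj br u, u)" "y = (ad_obj br v, v)" using gobj by blast
    then show "obj_add x y \<in> graph_obj br" unfolding gobj obj_add_def end0_add_def ad_obj_def
      using bl_facts(8)[OF blb] by auto
  next
    fix c x assume "x \<in> graph_obj br"
    then obtain u where "x = (ad_obj br u, u)" using gobj by blast
    then show "obj_scale c x \<in> graph_obj br" unfolding gobj obj_scale_def ad_obj_def
      using bl_facts(9)[OF blb] by auto
  next
    fix x y assume "x \<in> graph_mor br" "y \<in> graph_mor br"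
    then obtain u v where "x = (ad_mor br u, u)" "y = (ad_mor br v, v)" using gmor by blast
    then show "mor_add x y \<in> graph_mor br" unfolding gmor mor_add_def end0_add_def ad_mor_def ad_obj_def
      using bl_facts(8)[OF blb] by auto
  next
    fix c x assume "x \<in> graph_mor br"
    then obtain u where "x = (ad_mor br u, u)" using gmor by blast
    then show "mor_scale c x \<in> graph_mor br" unfolding gmor mor_scale_def ad_mor_def ad_obj_def
      using bl_facts(9)[OF blb] by auto
  next
    fix e assume "e \<in> graph_mor br"
    then obtain u where E: "e = (ad_mor br u, u)" using gmor by blast
    show "omni_s e \<in> graph_obj br" unfolding E gobj omni_s_def ad_mor_def by simp
    show "omni_t str_d e \<in> graph_obj br" unfolding E gobj omni_t_def ad_mor_def end0_add_def delta_def str_d_def ad_obj_def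
      by simp
  next
    fix x assume "x \<in> graph_obj br"
    then obtain u where X: "x = (ad_obj br u, u)" using gobj by blast
    have "omni_id x = (ad_mor br (u,0), (u,0))" unfolding X omni_id_def ad_mor_def by simp
    then show "omni_id x \<in> graph_mor br" unfolding graph_mor_def by auto
  qed
  have cl_obj: "omni_br_obj id x y \<in> graph_obj br" if "x \<in> graph_obj br" "y \<in> graph_obj br" for x y
  proof -
    have "x = (ad_obj br (snd x), snd x)" "y = (ad_obj br (snd y), snd y)" using that gobj by blast+
    then obtain u v where X: "x = (ad_obj br u, u)" "y = (ad_obj br v, v)" by blast
    show ?thesis unfolding X cl_obj_lem[of br, OF comm anti] graph_obj_def by blast
  qed
  have cl_mor: "omni_br_mor str_d id x y \<in> graph_mor br" if "x \<in> graph_mor br" "y \<in> graph_mor br" for x y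
  proof -
    have "x = (ad_mor br (snd x), snd x)" "y = (ad_mor br (snd y), snd y)" using that gmor by blast+
    then obtain u v where X: "x = (ad_mor br u, u)" "y = (ad_mor br v, v)" by blast
    show ?thesis unfolding X cl_mor_lem[of br, OF comm anti] graph_mor_def by blast
  qed
  have P2: "dirac str_d id id (graph_obj br) (graph_mor br)"
    unfolding dirac_def
    apply (intro conjI ballI)
        apply (rule sub)
       apply (rule Lobj)
      apply (rule Lmor)
     apply (erule (1) cl_obj)
    apply (erule (1) cl_mor)
    done
  show ?thesis using P1 P2 by (simp add: act_obj_def ad_obj_def act_mor_def ad_mor_def str_br_mor_def)
qed

end
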